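(* Let $d=3$ and let $V_n$, $n\in\mathbb{N}$, be defined as follows: writing $z=(z_1,\mathbf z_2)\in\mathbb{R}\times\mathbb{R}^2$, $C_{k,r}=[k,k+\tfrac14]\times D_r$ with $D_r\subset\mathbb{R}^2$ the disc of radius $r$ centred at $0$, $f(r)=\frac{1}{r|\ln r|\ln|\ln r|}$ for $r\in(0,e^{-1})$, and $V_n(z)=f\big(\tfrac{z_1}{25n}\big)\sum_{k=1}^n\mathbf 1_{C_{k,\sqrt{k/(25n)}}}(z)$. Then there exist $n_i\in\mathbb{N}$, $i\in\mathbb{N}$, such that $\|K(V_{n_i},1)\|_\infty\ge4^i$ for every $i\in\mathbb{N}$.
   Context: For $d=3$, $t>0$, $x,y\in\mathbb{R}^3$: $K(t,x,y)=e^{-\frac{|x||y|-\langle x,y\rangle}{2}}|x|^{-1}\mathbf 1_{|x|\le t|y|}$, and $\|K(V,t)\|_\infty=\sup_{x,y\in\mathbb{R}^3}\int_{\mathbb{R}^3}K(t,z-x,y)|V(z)|\,dz$. *)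

theory Defs
  imports "HOL-Analysis.Analysis"
begin

definition kernK :: "real \<Rightarrow> real^3 \<Rightarrow> real^3 \<Rightarrow> real" where
  "kernK t x y = exp (- (norm x * norm y - inner x y) / 2) * inverse (norm x)
      * (if norm x \<le> t * norm y then 1 else 0)"

definition Knorm :: "(real^3 \<Rightarrow> real) \<Rightarrow> real \<Rightarrow> ennreal" where
  "Knorm V t = (SUP xy \<in> (UNIV :: ((real^3) \<times> (real^3)) set).
      nn_integral lborel (\<lambda>z::real^3. ennreal (kernK t (z - fst xy) (snd xy) * \<bar>V z\<bar>)))"

definition disc :: "real \<Rightarrow> (real \<times> real) set" where
  "disc r = {p. (fst p)\<^sup>2 + (snd p)\<^sup>2 \<le> r\<^sup>2}"

definition cyl :: "nat \<Rightarrow> real \<Rightarrow> (real^3) set" where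
  "cyl k r = {z. real k \<le> z$1 \<and> z$1 \<le> real k + 1/4 \<and> (z$2, z$3) \<in> disc r}"

definition fr :: "real \<Rightarrow> real" where
  "fr r = 1 / (r * \<bar>ln r\<bar> * ln \<bar>ln r\<bar>)"

definition Vn :: "nat \<Rightarrow> real^3 \<Rightarrow> real" where
  "Vn n z = fr (z$1 / (25 * real n)) *
      (\<Sum>k = 1..n. indicator (cyl k (sqrt (real k / (25 * real n)))) z)"

end

theory Submission imports Defs begin


definition AA :: "nat \<Rightarrow> nat \<Rightarrow> real" where "AA n k = ln (25 * real n / real k)"
definition rho :: "nat \<Rightarrow> nat \<Rightarrow> real" where "rho n k = sqrt (real k / (50 * real n))"
definition bx :: "nat \<Rightarrow> nat \<Rightarrow> (real^3) set" where
  "bx n k = cbox (vector [real k, - rho n k, - rho n k]) (vector [real k + 1/4, rho n k, rho n k])"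
definition yv :: "nat \<Rightarrow> real^3" where "yv n = vector [25 * real n, 0, 0]"
definition dd :: "nat \<Rightarrow> nat \<Rightarrow> real" where
  "dd n k = 3/4 * (25 * real n) / ((real k + 1)^2 * AA n k * ln (AA n k))"

lemma AA_ge2: assumes "1 \<le> k" "k \<le> Suc n" "1 \<le> n" shows "2 \<le> AA n k"
proof -
  have "exp (2::real) = exp 1 * exp 1" by (simp add: exp_add[symmetric])
  also have "\<dots> \<le> 3 * 3" by (rule mult_mono) (use exp_le in auto)
  finally have e: "exp (2::real) \<le> 25/2" by simp
  have "25/2 \<le> 25 * real n / real k" using assms by (simp add: field_simps)
  hence "exp 2 \<le> 25 * real n / real k" using e by linarith
  moreover have "0 < 25 * real n / real k" using assms by simp
  ultimately have "ln (exp 2) \<le> ln (25 * real n / real k)" by (subst ln_le_cancel_iff) auto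
  thus ?thesis by (simp add: AA_def)
qed

lemma inner3: "inner (x::real^3) y = x$1 * y$1 + x$2 * y$2 + x$3 * y$3"
  by (simp add: inner_vec_def sum_3)

lemma norm3: "norm (x::real^3) = sqrt (x$1^2 + x$2^2 + x$3^2)"
  by (simp add: norm_eq_sqrt_inner inner3 power2_eq_square)

lemma fr_bound:
  assumes "1 \<le> k" "k \<le> n" "real k \<le> t" "t \<le> real k + 1"
  shows "25 * real n / ((real k + 1) * AA n k * ln (AA n k)) \<le> fr (t / (25 * real n))"
proof -
  define r where "r = t / (25 * real n)"
  define A where "A = AA n k"
  define b where "b = AA n (Suc k)"
  define L where "L = \<bar>ln r\<bar>"
  have n: "real n \<ge> 1" "real k \<ge> 1" using assms by auto
  have tpos: "t > 0" using assms n by linarith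
  have rpos: "r > 0" unfolding r_def using tpos n by simp
  have "t \<le> 25 * real n" using assms by linarith
  hence r1: "r \<le> 1" unfolding r_def using n by simp
  have L: "L = ln (25 * real n / t)" unfolding L_def r_def using r1 rpos tpos n
    by (simp add: ln_div r_def abs_if)
  have b2: "2 \<le> b" unfolding b_def using assms by (intro AA_ge2) auto
  have "25 * real n / (real (Suc k)) \<le> 25 * real n / t"
    using assms tpos by (intro divide_left_mono) auto
  hence bL: "b \<le> L" unfolding L b_def AA_def using tpos n
    by (subst ln_le_cancel_iff) auto
  have "25 * real n / t \<le> 25 * real n / real k"
    using assms tpos n by (intro divide_left_mono) auto
  hence LA: "L \<le> A" unfolding L A_def AA_def using tpos n
    by (subst ln_le_cancel_iff) auto
  have L2: "2 \<le> L" using b2 bL by linarith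
  have lnL: "0 < ln L" using L2 by simp
  have lnLA: "ln L \<le> ln A" using LA L2 by simp
  have rs: "r \<le> (real k + 1) / (25 * real n)" unfolding r_def using assms n
    by (simp add: divide_right_mono)
  have "r * L * ln L \<le> ((real k + 1) / (25 * real n)) * A * ln A"
    using rs LA lnLA rpos L2 lnL by (intro mult_mono) auto
  hence "1 / (((real k + 1) / (25 * real n)) * A * ln A) \<le> 1 / (r * L * ln L)"
  proof (rule divide_left_mono)
    have p1: "0 < r * L * ln L" using rpos L2 lnL by simp
    have "0 < A" using LA L2 by linarith
    hence p2: "0 < ((real k + 1) / (25 * real n)) * A * ln A" using n lnL lnLA LA L2
      by (intro mult_pos_pos divide_pos_pos) auto
    show "0 < ((real k + 1) / (25 * real n)) * A * ln A * (r * L * ln L)"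
      using p2 p1 by (rule mult_pos_pos)
  qed simp
  moreover have "1 / (((real k + 1) / (25 * real n)) * A * ln A) = 25 * real n / ((real k + 1) * A * ln A)"
    using n by (simp add: field_simps)
  ultimately show ?thesis unfolding fr_def r_def[symmetric] L_def[symmetric] A_def by simp
qed

lemma pointwise:
  assumes k: "1 \<le> k" "k \<le> n" and z: "z \<in> bx n k"
  shows "dd n k \<le> kernK 1 z (yv n) * \<bar>Vn n z\<bar>"
proof -
  have n: "real n \<ge> 1" "real k \<ge> 1" "real k \<le> real n" using k by auto
  define \<rho> where "\<rho> = rho n k"
  have rho0: "0 \<le> \<rho>" unfolding \<rho>_def rho_def by simp
  have rho2: "\<rho>^2 = real k / (50 * real n)" unfolding \<rho>_def rho_def by simp
  have zc: "real k \<le> z$1" "z$1 \<le> real k + 1/4" "\<bar>z$2\<bar> \<le> \<rho>" "\<bar>z$3\<bar> \<le> \<rho>"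
    using z unfolding bx_def mem_box_cart(2) forall_3 \<rho>_def by auto
  have z2: "(z$2)^2 \<le> \<rho>^2" using zc(3) by (metis abs_le_square_iff abs_of_nonneg rho0)
  have z3: "(z$3)^2 \<le> \<rho>^2" using zc(4) by (metis abs_le_square_iff abs_of_nonneg rho0)
  define s where "s = (z$2)^2 + (z$3)^2"
  have s0: "0 \<le> s" unfolding s_def by simp
  have s1: "s \<le> real k / (25 * real n)" using z2 z3 rho2 unfolding s_def by simp
  have "real k / (25 * real n) \<le> 1/25" using n by (simp add: field_simps)
  hence s2: "s \<le> 1/25" using s1 by linarith
  define t where "t = z$1"
  have t: "real k \<le> t" "t \<le> real k + 1/4" using zc unfolding t_def by auto
  have tpos: "0 < t" using t n by linarith
  have nz: "norm z = sqrt (t^2 + s)" unfolding norm3 s_def t_def by (simp add: add.assoc)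
  have nzt: "t \<le> norm z" unfolding nz using s0 tpos by (simp add: real_le_rsqrt)
  have "t^2 + s \<le> (real k + 1)^2"
  proof -
    have "t^2 \<le> (real k + 1/4)^2" using t tpos by (intro power_mono) auto
    thus ?thesis using s2 n by (simp add: power2_eq_square algebra_simps)
  qed
  hence "sqrt (t^2 + s) \<le> sqrt ((real k + 1)^2)" by (rule real_sqrt_le_mono)
  hence nzk: "norm z \<le> real k + 1" unfolding nz using n by simp
  have "(norm z - t) * (norm z + t) = s" unfolding nz using s0 tpos by (simp add: algebra_simps power2_eq_square[symmetric])
  hence "norm z - t = s / (norm z + t)" using nzt tpos by (simp add: field_simps)
  also have "\<dots> \<le> s / (2 * real k)" using nzt t s0 n by (intro divide_left_mono) auto
  also have "\<dots> \<le> (real k / (25 * real n)) / (2 * real k)" using s1 n by (intro divide_right_mono) auto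
  also have "\<dots> = 1 / (50 * real n)" using n by (simp add: field_simps)
  finally have dz: "norm z - t \<le> 1 / (50 * real n)" .
  have "norm (yv n) = sqrt ((25 * real n)^2)" unfolding norm3 yv_def by simp
  also have "\<dots> = 25 * real n" by (rule real_sqrt_unique) auto
  finally have ny: "norm (yv n) = 25 * real n" .
  have iy: "inner z (yv n) = 25 * real n * t" unfolding inner3 yv_def t_def by simp
  have E: "- (norm z * norm (yv n) - inner z (yv n)) / 2 \<ge> - 1/4"
  proof -
    have "norm z * norm (yv n) - inner z (yv n) = 25 * real n * (norm z - t)"
      unfolding ny iy by (simp add: algebra_simps)
    also have "\<dots> \<le> 25 * real n * (1 / (50 * real n))" using dz n by (intro mult_left_mono) auto
    also have "\<dots> = 1/2" using n by simp
    finally show ?thesis by simp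
  qed
  have ex: "exp (- (norm z * norm (yv n) - inner z (yv n)) / 2) \<ge> 3/4"
  proof -
    have "exp (- (norm z * norm (yv n) - inner z (yv n)) / 2) \<ge> exp (-1/4)" using E by (simp only: exp_le_cancel_iff)
    moreover have "exp (-1/4::real) \<ge> 1 + (-1/4)" by (rule exp_ge_add_one_self)
    ultimately show ?thesis by linarith
  qed
  have cond: "norm z \<le> 1 * norm (yv n)" unfolding ny using nzk n by simp
  have inv: "inverse (norm z) \<ge> 1 / (real k + 1)" using nzk nzt tpos
    unfolding inverse_eq_divide by (intro divide_left_mono mult_pos_pos) auto
  have K: "kernK 1 z (yv n) \<ge> 3/4 * (1 / (real k + 1))"
  proof -
    have "kernK 1 z (yv n) = exp (- (norm z * norm (yv n) - inner z (yv n)) / 2) * inverse (norm z)"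
      unfolding kernK_def using cond by simp
    also have "\<dots> \<ge> 3/4 * (1 / (real k + 1))" using ex inv by (intro mult_mono) auto
    finally show ?thesis .
  qed
  have incyl: "z \<in> cyl k (sqrt (real k / (25 * real n)))"
    unfolding cyl_def disc_def using t s1 unfolding t_def s_def by simp
  have S: "1 \<le> (\<Sum>j = 1..n. indicator (cyl j (sqrt (real j / (25 * real n)))) z :: real)"
  proof -
    have "(indicator (cyl k (sqrt (real k / (25 * real n)))) z :: real)
       \<le> (\<Sum>j = 1..n. indicator (cyl j (sqrt (real j / (25 * real n)))) z)"
      by (rule member_le_sum[where f = "\<lambda>j. indicator (cyl j (sqrt (real j / (25 * real n)))) z"]) (use k in auto)
    thus ?thesis using incyl by simp
  qed
  have F: "25 * real n / ((real k + 1) * AA n k * ln (AA n k)) \<le> fr (t / (25 * real n))"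
    using t k by (intro fr_bound) auto
  have A2: "2 \<le> AA n k" using k by (intro AA_ge2) auto
  have Fpos: "0 < 25 * real n / ((real k + 1) * AA n k * ln (AA n k))" using A2 n by simp
  have V: "\<bar>Vn n z\<bar> \<ge> 25 * real n / ((real k + 1) * AA n k * ln (AA n k))"
  proof -
    have "25 * real n / ((real k + 1) * AA n k * ln (AA n k)) * 1 \<le> fr (t / (25 * real n)) *
       (\<Sum>j = 1..n. indicator (cyl j (sqrt (real j / (25 * real n)))) z)"
      using F S Fpos by (intro mult_mono) auto
    also have "\<dots> = Vn n z" unfolding Vn_def t_def ..
    also have "\<dots> \<le> \<bar>Vn n z\<bar>" by simp
    finally show ?thesis by simp
  qed
  have "dd n k = (3/4 * (1 / (real k + 1))) * (25 * real n / ((real k + 1) * AA n k * ln (AA n k)))"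
    unfolding dd_def by (simp add: power2_eq_square field_simps)
  also have "\<dots> \<le> kernK 1 z (yv n) * \<bar>Vn n z\<bar>"
  proof -
    have "0 \<le> 3/4 * (1 / (real k + 1))" by simp
    hence K0: "0 \<le> kernK 1 z (yv n)" using K by linarith
    show ?thesis using K V Fpos K0 by (intro mult_mono) auto
  qed
  finally show ?thesis .
qed

definition HH :: "nat \<Rightarrow> nat \<Rightarrow> real" where "HH n k = ln (ln (AA n k))"

lemma telestep: assumes "1 \<le> k" "k \<le> n"
  shows "HH n k - HH n (Suc k) \<le> 4 / (real k * AA n k * ln (AA n k))"
proof -
  define a where "a = AA n k"
  define b where "b = AA n (Suc k)"
  have b2: "2 \<le> b" unfolding b_def using assms by (intro AA_ge2) auto
  have a2: "2 \<le> a" unfolding a_def using assms by (intro AA_ge2) auto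
  have kpos: "real k > 0" using assms by simp
  have ab: "a - b = ln ((real k + 1) / real k)"
    unfolding a_def b_def AA_def using assms by (simp add: ln_div ln_mult)
  have "ln ((real k + 1) / real k) \<le> (real k + 1) / real k - 1"
    by (rule ln_le_minus_one) (use kpos in simp)
  also have "\<dots> = 1 / real k" using kpos by (simp add: field_simps)
  finally have ab1: "a - b \<le> 1 / real k" using ab by simp
  have ab0: "0 \<le> a - b" using ab kpos by simp
  have lb: "ln 2 \<le> ln b" using b2 by simp
  have lnb: "0 < ln b" using b2 by simp
  have "ln a - ln b = ln (a / b)" using a2 b2 by (simp add: ln_div)
  also have "\<dots> \<le> a / b - 1" by (rule ln_le_minus_one) (use a2 b2 in simp)
  also have "\<dots> = (a - b) / b" using b2 by (simp add: field_simps)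
  finally have l1: "ln a - ln b \<le> (a - b) / b" .
  have lna: "0 < ln a" using a2 by simp
  have "ln (ln a) - ln (ln b) = ln (ln a / ln b)" using lna lnb by (simp add: ln_div)
  also have "\<dots> \<le> ln a / ln b - 1" by (rule ln_le_minus_one) (use lna lnb in simp)
  also have "\<dots> = (ln a - ln b) / ln b" using lnb by (simp add: field_simps)
  also have "\<dots> \<le> ((a - b) / b) / ln b" by (rule divide_right_mono[OF l1]) (use lnb in simp)
  also have "\<dots> = (a - b) / (b * ln b)" by simp
  also have "\<dots> \<le> (1 / real k) / (b * ln b)" by (rule divide_right_mono[OF ab1]) (use lnb b2 in simp)
  finally have d: "ln (ln a) - ln (ln b) \<le> 1 / (real k * (b * ln b))" by simp
  have "1 / real k \<le> 1" using assms by simp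
  hence "a \<le> 2 * b" using ab1 b2 by linarith
  hence "ln a \<le> ln (2 * b)" using a2 by (subst ln_le_cancel_iff) auto
  also have "\<dots> = ln 2 + ln b" using b2 by (simp add: ln_mult)
  finally have "ln a \<le> 2 * ln b" using lb by linarith
  hence "a * ln a \<le> (2 * b) * (2 * ln b)" using \<open>a \<le> 2 * b\<close> lna a2
    by (intro mult_mono) auto
  hence am: "a * ln a \<le> 4 * (b * ln b)" by simp
  have "1 / (real k * (b * ln b)) = 4 / (real k * (4 * (b * ln b)))" by simp
  also have "\<dots> \<le> 4 / (real k * (a * ln a))"
    by (rule frac_le) (use am kpos lna a2 in \<open>auto intro!: mult_left_mono mult_pos_pos\<close>)
  finally have "1 / (real k * (b * ln b)) \<le> 4 / (real k * (a * ln a))" .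
  moreover have "4 / (real k * (a * ln a)) = 4 / (real k * a * ln a)" by (simp only: mult.assoc)
  ultimately have "ln (ln a) - ln (ln b) \<le> 4 / (real k * a * ln a)" using d by linarith
  thus ?thesis unfolding HH_def a_def b_def .
qed


lemma prod_3': "prod f (UNIV::3 set) = f 1 * f 2 * f 3"
  unfolding UNIV_3 by (simp add: ac_simps)

lemma bx_vol: assumes "1 \<le> k" "k \<le> n"
  shows "emeasure lborel (bx n k) = ennreal (real k / (50 * real n))"
proof -
  have rho0: "0 \<le> rho n k" unfolding rho_def by simp
  have le: "\<forall>i. (vector [real k, - rho n k, - rho n k] :: real^3)$i \<le> (vector [real k + 1/4, rho n k, rho n k] :: real^3)$i"
    unfolding forall_3 using rho0 by simp
  hence ne: "bx n k \<noteq> {}" unfolding bx_def interval_eq_empty_cart(2) by (auto simp: not_less)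
  have "emeasure lborel (bx n k) = ennreal (measure lborel (bx n k))"
    unfolding bx_def using emeasure_lborel_cbox_finite by (intro emeasure_eq_ennreal_measure) (simp add: less_top)
  also have "measure lborel (bx n k) = (rho n k)^2"
    using ne unfolding bx_def content_cbox_cart[OF ne[unfolded bx_def]] prod_3' by (simp add: power2_eq_square)
  also have "(rho n k)^2 = real k / (50 * real n)" unfolding rho_def by simp
  finally show ?thesis .
qed


lemma bx_disj: assumes "z \<in> bx n j" "z \<in> bx n k" shows "j = k"
proof -
  have "real j \<le> z$1" "z$1 \<le> real j + 1/4" "real k \<le> z$1" "z$1 \<le> real k + 1/4"
    using assms unfolding bx_def mem_box_cart(2) by (auto dest: spec[of _ 1])
  hence "real j < real k + 1" "real k < real j + 1" by linarith+
  thus ?thesis by linarith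
qed

lemma ptsum:
  assumes "1 \<le> n"
  shows "(\<Sum>k\<in>{1..n}. ennreal (dd n k) * indicator (bx n k) z)
     \<le> ennreal (kernK 1 z (yv n) * \<bar>Vn n z\<bar>)"
proof (cases "\<exists>j\<in>{1..n}. z \<in> bx n j")
  case True
  then obtain j where j: "j \<in> {1..n}" "z \<in> bx n j" by blast
  have "(\<Sum>k\<in>{1..n}. ennreal (dd n k) * indicator (bx n k) z) = (\<Sum>k\<in>{1..n}. if k = j then ennreal (dd n j) else 0)"
  proof (rule sum.cong)
    fix k assume "k \<in> {1..n}"
    show "ennreal (dd n k) * indicator (bx n k) z = (if k = j then ennreal (dd n j) else 0)"
    proof (cases "k = j")
      case True thus ?thesis using j by simp
    next
      case False
      hence "z \<notin> bx n k" using j bx_disj by blast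
      thus ?thesis using False by simp
    qed
  qed simp
  also have "\<dots> = ennreal (dd n j)" using j by (simp add: sum.delta)
  also have "\<dots> \<le> ennreal (kernK 1 z (yv n) * \<bar>Vn n z\<bar>)"
    using pointwise[of j n z] j by (intro ennreal_leI) auto
  finally show ?thesis .
next
  case False
  hence "(\<Sum>k\<in>{1..n}. ennreal (dd n k) * indicator (bx n k) z) = 0"
    by (intro sum.neutral) auto
  thus ?thesis by simp
qed

lemma lowerint:
  assumes "1 \<le> n"
  shows "(\<Sum>k\<in>{1..n}. ennreal (dd n k) * ennreal (real k / (50 * real n)))
     \<le> nn_integral lborel (\<lambda>z. ennreal (kernK 1 z (yv n) * \<bar>Vn n z\<bar>))"
proof -
  have "(\<Sum>k\<in>{1..n}. ennreal (dd n k) * ennreal (real k / (50 * real n)))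
      = (\<Sum>k\<in>{1..n}. ennreal (dd n k) * emeasure lborel (bx n k))"
    by (intro sum.cong) (auto simp: bx_vol)
  also have "\<dots> = (\<Sum>k\<in>{1..n}. \<integral>\<^sup>+ z. ennreal (dd n k) * indicator (bx n k) z \<partial>lborel)"
    by (intro sum.cong refl nn_integral_cmult_indicator[symmetric]) (simp add: bx_def)
  also have "\<dots> = \<integral>\<^sup>+ z. (\<Sum>k\<in>{1..n}. ennreal (dd n k) * indicator (bx n k) z) \<partial>lborel"
    by (intro nn_integral_sum[symmetric]) (simp add: bx_def)
  also have "\<dots> \<le> nn_integral lborel (\<lambda>z. ennreal (kernK 1 z (yv n) * \<bar>Vn n z\<bar>))"
    by (intro nn_integral_mono ptsum assms)
  finally show ?thesis .
qed


lemma term_bound: assumes "1 \<le> k" "k \<le> n"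
  shows "3/128 * (HH n k - HH n (Suc k)) \<le> dd n k * (real k / (50 * real n))"
proof -
  define P where "P = AA n k * ln (AA n k)"
  have A2: "2 \<le> AA n k" using assms by (intro AA_ge2) auto
  have P0: "0 < P" unfolding P_def using A2 by simp
  have n: "real n \<ge> 1" "real k \<ge> 1" using assms by auto
  have "3/128 * (HH n k - HH n (Suc k)) \<le> 3/128 * (4 / (real k * AA n k * ln (AA n k)))"
    using telestep[OF assms] by simp
  also have "\<dots> = (3/32) / (real k * P)" unfolding P_def by (simp add: mult.assoc)
  also have "\<dots> = (3/8) * (1 / (4 * real k)) / P" using n P0 by (simp add: field_simps)
  also have "\<dots> \<le> (3/8) * (real k / (real k + 1)^2) / P"
  proof -
    have "(real k + 1)^2 \<le> (2 * real k)^2" using n by (intro power_mono) auto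
    hence "(real k + 1)^2 \<le> 4 * real k * real k" by (simp add: power2_eq_square)
    hence "1 / (4 * real k) \<le> real k / (real k + 1)^2" using n by (simp add: field_simps)
    thus ?thesis using P0 by (intro divide_right_mono mult_left_mono) auto
  qed
  also have "\<dots> = dd n k * (real k / (50 * real n))" unfolding dd_def P_def using n A2
    by (simp add: field_simps power2_eq_square)
  finally show ?thesis .
qed

lemma realsum: assumes "1 \<le> n"
  shows "3/128 * (HH n 1 - HH n (Suc n)) \<le> (\<Sum>k\<in>{1..n}. dd n k * (real k / (50 * real n)))"
proof -
  have tel: "(\<Sum>k=1..n. HH n (Suc k) - HH n k) = HH n (Suc n) - HH n 1" by (rule sum_Suc_diff) simp
  have "3/128 * (HH n 1 - HH n (Suc n)) = (\<Sum>k\<in>{1..n}. 3/128 * (HH n k - HH n (Suc k)))"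
  proof -
    have "(\<Sum>k\<in>{1..n}. 3/128 * (HH n k - HH n (Suc k))) = 3/128 * (\<Sum>k\<in>{1..n}. (HH n k - HH n (Suc k)))"
      by (simp add: sum_distrib_left)
    also have "(\<Sum>k\<in>{1..n}. (HH n k - HH n (Suc k))) = - (\<Sum>k=1..n. HH n (Suc k) - HH n k)"
      by (simp add: sum_negf[symmetric])
    finally have X: "(\<Sum>k\<in>{1..n}. 3/128 * (HH n k - HH n (Suc k))) = 3/128 * (- (\<Sum>k=1..n. HH n (Suc k) - HH n k))" .
    show ?thesis unfolding X tel by (simp add: algebra_simps)
  qed
  also have "\<dots> \<le> (\<Sum>k\<in>{1..n}. dd n k * (real k / (50 * real n)))"
    by (intro sum_mono term_bound) auto
  finally show ?thesis .
qed

lemma HH_last: assumes "1 \<le> n" shows "HH n (Suc n) \<le> 25"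
proof -
  define b where "b = AA n (Suc n)"
  have b2: "2 \<le> b" unfolding b_def using assms by (intro AA_ge2) auto
  have "ln b \<le> b - 1" using b2 by (intro ln_le_minus_one) auto
  hence lb: "0 < ln b" "ln b \<le> b" using b2 by auto
  have "ln (ln b) \<le> ln b - 1" using lb by (intro ln_le_minus_one) auto
  moreover have "25 * real n / real (Suc n) \<le> 25" using assms by (simp add: field_simps)
  hence "b \<le> 25 * real n / real (Suc n) - 1" unfolding b_def AA_def using assms
    by (intro ln_le_minus_one) auto
  ultimately show ?thesis unfolding HH_def b_def[symmetric] using lb
    \<open>25 * real n / real (Suc n) \<le> 25\<close> by linarith
qed

lemma HH_first: assumes "exp (exp (exp M)) \<le> real n" shows "M \<le> HH n 1"
proof -
  have p: "0 < real n" using assms exp_gt_zero[of "exp (exp M)"] by linarith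
  have "exp (exp (exp M)) \<le> 25 * real n" using assms p by linarith
  hence "ln (exp (exp (exp M))) \<le> ln (25 * real n)" using p by (subst ln_le_cancel_iff) auto
  hence e1: "exp (exp M) \<le> ln (25 * real n)" by simp
  have "0 < ln (25 * real n)" using e1 exp_gt_zero[of "exp M"] by linarith
  hence "ln (exp (exp M)) \<le> ln (ln (25 * real n))" using e1 by (subst ln_le_cancel_iff) auto
  hence e2: "exp M \<le> ln (ln (25 * real n))" by simp
  have "0 < ln (ln (25 * real n))" using e2 exp_gt_zero[of M] by linarith
  hence "ln (exp M) \<le> ln (ln (ln (25 * real n)))" using e2 by (subst ln_le_cancel_iff) auto
  thus ?thesis unfolding HH_def AA_def by simp
qed


lemma Knorm_bound: assumes "1 \<le> n"
  shows "ennreal (3/128 * (HH n 1 - HH n (Suc n))) \<le> Knorm (Vn n) 1"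
proof -
  have dd0: "\<And>k. k \<in> {1..n} \<Longrightarrow> 0 \<le> dd n k"
  proof -
    fix k assume "k \<in> {1..n}"
    hence "2 \<le> AA n k" by (intro AA_ge2) auto
    thus "0 \<le> dd n k" unfolding dd_def by simp
  qed
  have "ennreal (3/128 * (HH n 1 - HH n (Suc n))) \<le> ennreal (\<Sum>k\<in>{1..n}. dd n k * (real k / (50 * real n)))"
    using realsum[OF assms] by (rule ennreal_leI)
  also have "\<dots> = (\<Sum>k\<in>{1..n}. ennreal (dd n k * (real k / (50 * real n))))"
    using dd0 by (intro sum_ennreal[symmetric]) simp
  also have "\<dots> = (\<Sum>k\<in>{1..n}. ennreal (dd n k) * ennreal (real k / (50 * real n)))"
    using dd0 by (intro sum.cong refl ennreal_mult) auto
  also have "\<dots> \<le> nn_integral lborel (\<lambda>z. ennreal (kernK 1 z (yv n) * \<bar>Vn n z\<bar>))"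
    by (rule lowerint[OF assms])
  also have "\<dots> = nn_integral lborel (\<lambda>z::real^3. ennreal (kernK 1 (z - fst (0::real^3, yv n)) (snd (0::real^3, yv n)) * \<bar>Vn n z\<bar>))"
    by simp
  also have "\<dots> \<le> Knorm (Vn n) 1" unfolding Knorm_def by (rule SUP_upper) simp
  finally show ?thesis .
qed

theorem lemma4p3:
  shows "\<exists>ni :: nat \<Rightarrow> nat. \<forall>i. 1 \<le> ni i \<and> Knorm (Vn (ni i)) 1 \<ge> 4 ^ i"
proof (intro exI allI conjI)
  fix i :: nat
  define M :: real where "M = 25 + 43 * 4 ^ i"
  define n where "n = nat \<lceil>exp (exp (exp M))\<rceil>"
  have nge: "exp (exp (exp M)) \<le> real n" unfolding n_def by linarith
  have "0 < exp (exp (exp M))" by simp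
  hence n1: "1 \<le> n" using nge by linarith
  show "1 \<le> n" by (rule n1)
  have "M \<le> HH n 1" by (rule HH_first[OF nge])
  moreover have "HH n (Suc n) \<le> 25" by (rule HH_last[OF n1])
  ultimately have "3/128 * (43 * 4 ^ i) \<le> 3/128 * (HH n 1 - HH n (Suc n))" unfolding M_def by simp
  moreover have "(4::real) ^ i \<le> 3/128 * (43 * 4 ^ i)" by simp
  ultimately have "ennreal (4 ^ i) \<le> ennreal (3/128 * (HH n 1 - HH n (Suc n)))"
    by (intro ennreal_leI) linarith
  also have "\<dots> \<le> Knorm (Vn n) 1" by (rule Knorm_bound[OF n1])
  finally have fin: "ennreal (4 ^ i) \<le> Knorm (Vn n) 1" .
  have "ennreal ((4::real) ^ i) = (4::ennreal) ^ i"
    by (metis ennreal_power ennreal_numeral zero_le_numeral)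
  with fin show "4 ^ i \<le> Knorm (Vn n) 1" by simp
qed

end
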